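(* Let $\alpha\in\mathbb C$, $m\in\mathbb N$. The map $\Upsilon_{(\alpha,m)}:\widehat R\to\mathbb C[[\rho]][\sigma]/(\sigma^m)$, $h\mapsto\gamma\big(\widehat T_{(\alpha,2m)}(h)\big)$, is a group homomorphism from $(\widehat R,+)$ to $(\mathbb C[[\rho]][\sigma]/(\sigma^m),\circ)$.
   Context: $\widehat R=\mathbb C[[z_1,z_2]]=\mathbb C[[\rho\cos\varphi,\rho\sin\varphi]]$; for $f\in\widehat R$ and $i\in\mathbb N_0$, $f^{(i)}_\alpha=\partial^if/\partial\varphi^i|_{\varphi=\alpha}\in\mathbb C[[\rho]]$, and $T_{(\alpha,k)}(f)=\sum_{i=0}^{k-1}f^{(i)}_\alpha\varepsilon^i/i!\in\mathbb C[[\rho]][\varepsilon]/(\varepsilon^k)$. For $h\in\widehat R$, $\widehat T_{(\alpha,k)}(h)\in\mathbb C[[\rho]][\varepsilon]/(\varepsilon^{k})$ is defined by $T_{(\alpha,k)}(\exp(h))=\widehat T_{(\alpha,k)}(h)\cdot\exp(h^{(0)}_\alpha)$. For a ring $\Bbbk$, $K=\Bbbk[\varepsilon^2]/(\varepsilon^{2m})\subset L=\Bbbk[\varepsilon]/(\varepsilon^{2m})$ and a unit $g\in L$, $\gamma(g)$ denotes the unique element of $K$ with $g\cdot(1+\varepsilon\gamma(g))\in K$; here $\Bbbk=\mathbb C[[\rho]]$ and $K$ is identified with $\mathbb C[[\rho]][\sigma]/(\sigma^m)$ via $\sigma=\varepsilon^2$. The operation is $\gamma_1\circ\gamma_2=(\gamma_1+\gamma_2)(1+\sigma\gamma_1\gamma_2)^{-1}$.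 *)

theory Defs
  imports "HOL-Computational_Algebra.Formal_Power_Series"
          "HOL-Computational_Algebra.Polynomial"
          "HOL-Algebra.Group"
          "HOL-Analysis.Derivative"
begin

text \<open>R-hat = C[[z1,z2]] is modelled as complex fps fps, with  fps_nth (fps_nth f a) b  the coefficient
  of z1^a z2^b.  C[[rho]] is complex fps.  The truncated ring k[eps]/(eps^k) is modelled
  by polynomials over k of degree < k (canonical representatives), with truncated
  multiplication.\<close>

definition ptrunc :: "nat \<Rightarrow> 'a::comm_ring_1 poly \<Rightarrow> 'a poly" where
  "ptrunc k p = (\<Sum>i<k. monom (coeff p i) i)"

definition tmult :: "nat \<Rightarrow> 'a::comm_ring_1 poly \<Rightarrow> 'a poly \<Rightarrow> 'a poly" where
  "tmult k p q = ptrunc k (p * q)"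

definition tone :: "nat \<Rightarrow> 'a::comm_ring_1 poly" where
  "tone k = ptrunc k 1"

definition tinv :: "nat \<Rightarrow> 'a::comm_ring_1 poly \<Rightarrow> 'a poly" where
  "tinv k p = (THE u. ptrunc k u = u \<and> tmult k p u = tone k)"

text \<open>f^{(i)}_alpha: substitute z1 = rho cos phi, z2 = rho sin phi, differentiate i times
  in phi and evaluate at phi = alpha; coefficient of rho^n.\<close>
definition phi_deriv :: "complex fps fps \<Rightarrow> complex \<Rightarrow> nat \<Rightarrow> complex fps" where
  "phi_deriv f \<alpha> i = Abs_fps (\<lambda>n. \<Sum>a\<le>n. fps_nth (fps_nth f a) (n - a) *
       (deriv ^^ i) (\<lambda>t. cos t ^ a * sin t ^ (n - a)) \<alpha>)"

definition taylor_T :: "complex \<Rightarrow> nat \<Rightarrow> complex fps fps \<Rightarrow> complex fps poly" where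
  "taylor_T \<alpha> k f = (\<Sum>i<k. monom (fps_const (1 / fact i) * phi_deriv f \<alpha> i) i)"

definition fps_Exp :: "complex fps \<Rightarrow> complex fps" where
  "fps_Exp g = fps_const (exp (fps_nth g 0)) * (fps_exp 1 oo (g - fps_const (fps_nth g 0)))"

text \<open>exp on C[[z1,z2]]: exp(h) = e^{c} * sum_n (h - c)^n / n!, c the constant term;
  the coefficient of z1^i z2^j only receives contributions from n <= i + j.\<close>
definition bexp :: "complex fps fps \<Rightarrow> complex fps fps" where
  "bexp h = (let c = fps_nth (fps_nth h 0) 0 in
     Abs_fps (\<lambda>i. Abs_fps (\<lambda>j. exp c *
        (\<Sum>n\<le>i + j. fps_nth (fps_nth ((h - fps_const (fps_const c)) ^ n) i) j / fact n))))"

definition taylor_That :: "complex \<Rightarrow> nat \<Rightarrow> complex fps fps \<Rightarrow> complex fps poly" where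
  "taylor_That \<alpha> k h = (THE x. ptrunc k x = x \<and>
      taylor_T \<alpha> k (bexp h) = tmult k x [: fps_Exp (phi_deriv h \<alpha> 0) :])"

text \<open>K = k[eps^2]/(eps^{2m}) inside L = k[eps]/(eps^{2m}).\<close>
definition evenK :: "nat \<Rightarrow> 'a::comm_ring_1 poly set" where
  "evenK m = {p. ptrunc (2 * m) p = p \<and> (\<forall>i. odd i \<longrightarrow> coeff p i = 0)}"

definition gammaK :: "nat \<Rightarrow> 'a::comm_ring_1 poly \<Rightarrow> 'a poly" where
  "gammaK m g = (THE c. c \<in> evenK m \<and> tmult (2 * m) g (1 + [:0, 1:] * c) \<in> evenK m)"

text \<open>Identification of K with k[sigma]/(sigma^m) via sigma = eps^2.\<close>
definition to_sigma :: "'a::comm_ring_1 poly \<Rightarrow> 'a poly" where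
  "to_sigma p = (\<Sum>i\<le>degree p. monom (coeff p (2 * i)) i)"

definition circ :: "nat \<Rightarrow> 'a::comm_ring_1 poly \<Rightarrow> 'a poly \<Rightarrow> 'a poly" where
  "circ m g1 g2 = tmult m (g1 + g2)
      (tinv m (tone m + tmult m [:0, 1:] (tmult m g1 g2)))"

definition Upsilon :: "complex \<Rightarrow> nat \<Rightarrow> complex fps fps \<Rightarrow> complex fps poly" where
  "Upsilon \<alpha> m h = to_sigma (gammaK m (taylor_That \<alpha> (2 * m) h))"

definition Rhat_add_group :: "complex fps fps monoid" where
  "Rhat_add_group = \<lparr>carrier = UNIV, mult = (+), one = 0\<rparr>"

definition circ_group :: "nat \<Rightarrow> complex fps poly monoid" where
  "circ_group m = \<lparr>carrier = {p. ptrunc m p = p}, mult = circ m, one = 0\<rparr>"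

end

theory Submission
  imports Defs "HOL-Complex_Analysis.Cauchy_Integral_Formula"
begin


definition eqm :: "nat \<Rightarrow> 'a::comm_ring_1 poly \<Rightarrow> 'a poly \<Rightarrow> bool" where
  "eqm k p q \<longleftrightarrow> (\<forall>i<k. coeff p i = coeff q i)"

definition Zm :: "nat \<Rightarrow> 'a::comm_ring_1 poly \<Rightarrow> bool" where
  "Zm k p \<longleftrightarrow> (\<forall>i<k. coeff p i = 0)"

lemma coeff_ptrunc: "coeff (ptrunc k p) i = (if i < k then coeff p i else 0)"
  unfolding ptrunc_def by (simp add: coeff_sum)

lemma ptrunc_eq_iff: "ptrunc k p = ptrunc k q \<longleftrightarrow> eqm k p q"
  unfolding eqm_def poly_eq_iff coeff_ptrunc by auto

lemma ptrunc_idem[simp]: "ptrunc k (ptrunc k p) = ptrunc k p"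
  by (simp add: poly_eq_iff coeff_ptrunc)

lemma ptrunc_id_iff: "ptrunc k p = p \<longleftrightarrow> (\<forall>i\<ge>k. coeff p i = 0)"
  unfolding poly_eq_iff coeff_ptrunc by (metis not_le)

lemma eqm_Zm: "eqm k p q \<longleftrightarrow> Zm k (p - q)"
  by (simp add: eqm_def Zm_def)

lemma Zm_add: "Zm k p \<Longrightarrow> Zm k q \<Longrightarrow> Zm k (p + q)"
  by (simp add: Zm_def)
lemma Zm_diff: "Zm k p \<Longrightarrow> Zm k q \<Longrightarrow> Zm k (p - q)"
  by (simp add: Zm_def)
lemma Zm_uminus: "Zm k p \<Longrightarrow> Zm k (- p)"
  by (simp add: Zm_def)
lemma Zm_0: "Zm k 0"
  by (simp add: Zm_def)
lemma Zm_multR: "Zm k p \<Longrightarrow> Zm k (q * p)"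
  by (simp add: Zm_def coeff_mult)
lemma Zm_multL: "Zm k p \<Longrightarrow> Zm k (p * q)"
  by (simp add: Zm_def coeff_mult)

lemma Zm_ptrunc: "Zm k (ptrunc k p - p)"
  by (simp add: Zm_def coeff_ptrunc)

lemma eqm_refl: "eqm k p p" by (simp add: eqm_def)
lemma eqm_sym: "eqm k p q \<Longrightarrow> eqm k q p" by (simp add: eqm_def)
lemma eqm_trans: "eqm k p q \<Longrightarrow> eqm k q r \<Longrightarrow> eqm k p r" by (simp add: eqm_def)

lemma eqm_mult: "eqm k p p' \<Longrightarrow> eqm k q q' \<Longrightarrow> eqm k (p * q) (p' * q')"
proof -
  assume a: "eqm k p p'" "eqm k q q'"
  have "p * q - p' * q' = (p - p') * q + p' * (q - q')" by (simp add: algebra_simps)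
  moreover have "Zm k ((p - p') * q + p' * (q - q'))"
    using a by (intro Zm_add Zm_multL Zm_multR) (simp_all add: eqm_Zm)
  ultimately show ?thesis by (simp add: eqm_Zm)
qed

lemma ptrunc_mult_left: "ptrunc k (ptrunc k p * q) = ptrunc k (p * q)"
  unfolding ptrunc_eq_iff by (intro eqm_mult) (simp_all add: eqm_def coeff_ptrunc)
lemma ptrunc_mult_right: "ptrunc k (p * ptrunc k q) = ptrunc k (p * q)"
  unfolding ptrunc_eq_iff by (intro eqm_mult) (simp_all add: eqm_def coeff_ptrunc)

lemma Zm_power: "coeff N 0 = 0 \<Longrightarrow> Zm k (N ^ k)"
proof -
  assume "coeff N 0 = 0"
  then obtain N' where N: "N = pCons 0 N'" by (metis pCons_cases coeff_pCons_0)
  have "N = monom 1 1 * N'" unfolding N by (simp add: monom_Suc)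
  then have "N ^ k = monom 1 k * N' ^ k" by (simp add: power_mult_distrib monom_power)
  then show ?thesis by (simp add: Zm_def coeff_monom_mult)
qed

lemma inverse_exists:
  fixes A :: "'a::comm_ring_1 poly"
  assumes "coeff A 0 * b = 1"
  shows "\<exists>v. eqm k (A * v) 1"
proof -
  define N where "N = 1 - [:b:] * A"
  have N0: "coeff N 0 = 0" using assms by (simp add: N_def mult.commute)
  have "A * ([:b:] * (\<Sum>i<k. N ^ i)) = (1 - N) * (\<Sum>i<k. N ^ i)"
    by (simp add: N_def algebra_simps)
  also have "\<dots> = 1 - N ^ k" by (simp add: one_diff_power_eq)
  finally have "eqm k (A * ([:b:] * (\<Sum>i<k. N ^ i))) 1"
    using Zm_power[OF N0, of k] by (simp add: eqm_Zm Zm_def)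
  then show ?thesis by blast
qed

lemma tinv_eq:
  assumes "eqm k (D * v) 1"
  shows "tinv k D = ptrunc k v" and "eqm k (D * tinv k D) 1"
proof -
  have P: "ptrunc k (ptrunc k v) = ptrunc k v \<and> tmult k D (ptrunc k v) = tone k"
    using assms by (simp add: tmult_def tone_def ptrunc_mult_right ptrunc_eq_iff)
  have U: "u = ptrunc k v" if "ptrunc k u = u \<and> tmult k D u = tone k" for u
  proof -
    have e: "eqm k (D * u) 1" using that by (simp add: tmult_def tone_def ptrunc_eq_iff)
    have "eqm k (v * (D * u)) (v * 1)" by (rule eqm_mult[OF eqm_refl e])
    moreover have "eqm k (u * (D * v)) (u * 1)" by (rule eqm_mult[OF eqm_refl assms])
    ultimately have "eqm k u v" by (auto simp: eqm_def algebra_simps)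
    then show ?thesis using that by (metis ptrunc_eq_iff)
  qed
  show "tinv k D = ptrunc k v" unfolding tinv_def
    using P U by (intro the_equality) blast+
  then show "eqm k (D * tinv k D) 1"
    using assms by (metis eqm_mult eqm_refl eqm_trans eqm_def coeff_ptrunc ptrunc_eq_iff ptrunc_idem)
qed



definition emb :: "'a::comm_ring_1 poly \<Rightarrow> 'a poly" where
  "emb q = pcompose q [:0,0,1:]"

definition od :: "'a::comm_ring_1 poly \<Rightarrow> 'a poly" where
  "od p = (\<Sum>i\<le>degree p. monom (coeff p (2 * i + 1)) i)"

lemma coeff_emb: "coeff (emb q) j = (if even j then coeff q (j div 2) else 0)"
  unfolding emb_def
proof (induction q arbitrary: j rule: pCons_induct)
  case 0 then show ?case by simp
next
  case (pCons a p)
  show ?case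
  proof (cases j)
    case 0 then show ?thesis by (simp add: pcompose_pCons)
  next
    case (Suc j')
    then show ?thesis
    proof (cases j')
      case 0 then show ?thesis using Suc by (simp add: pcompose_pCons)
    next
      case (Suc j'')
      have "coeff (pcompose (pCons a p) [:0, 0, 1:]) j = coeff (pcompose p [:0, 0, 1:]) j''"
        using \<open>j = Suc j'\<close> Suc by (simp add: pcompose_pCons)
      also have "\<dots> = (if even j then coeff (pCons a p) (j div 2) else 0)"
        using pCons.IH[of j''] \<open>j = Suc j'\<close> Suc by auto
      finally show ?thesis .
    qed
  qed
qed

lemma coeff_to_sigma: "coeff (to_sigma p) i = coeff p (2 * i)"
  unfolding to_sigma_def coeff_sum
  by (auto simp: coeff_eq_0)

lemma coeff_od: "coeff (od p) i = coeff p (2 * i + 1)"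
  unfolding od_def coeff_sum
  by (auto simp: coeff_eq_0)

lemma emb_add: "emb (p + q) = emb p + emb q" by (simp add: emb_def pcompose_add)
lemma emb_mult: "emb (p * q) = emb p * emb q" by (simp add: emb_def pcompose_mult)
lemma emb_1: "emb 1 = 1" by (simp add: emb_def pcompose_1)
lemma emb_0: "emb 0 = 0" by (simp add: emb_def)
lemma emb_X: "emb [:0,1:] = [:0,1:] * [:0,1:]" by (simp add: emb_def pcompose_pCons)

lemma decomp: "p = emb (to_sigma p) + [:0,1:] * emb (od p)"
proof -
  have "coeff p j = coeff (emb (to_sigma p) + [:0,1:] * emb (od p)) j" for j
  proof (cases j)
    case 0 then show ?thesis by (simp add: coeff_emb coeff_to_sigma)
  next
    case (Suc j')
    then show ?thesis
      by (auto simp: coeff_emb coeff_to_sigma coeff_od elim!: evenE oddE)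
  qed
  then show ?thesis by (simp add: poly_eq_iff)
qed

lemma ts_emb: "to_sigma (emb P + [:0,1:] * emb Q) = P"
proof -
  have "coeff ([:0,1:] * emb Q) (2*n) = 0" for n by (cases n) (simp_all add: coeff_emb)
  then show ?thesis by (simp add: poly_eq_iff coeff_to_sigma coeff_emb)
qed

lemma od_emb: "od (emb P + [:0,1:] * emb Q) = Q"
  by (simp add: poly_eq_iff coeff_od coeff_emb)

lemma ts_emb0: "to_sigma (emb P) = P" using ts_emb[of P 0] by (simp add: emb_0)

lemma mult_decomp:
  "to_sigma (p * q) = to_sigma p * to_sigma q + [:0,1:] * od p * od q"
  "od (p * q) = to_sigma p * od q + od p * to_sigma q"
proof -
  define A B C D where "A = to_sigma p" "B = od p" "C = to_sigma q" "D = od q"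
  define X :: "'a poly" where "X = [:0,1:]"
  have eX: "emb X = X * X" by (simp add: X_def emb_X)
  have "p * q = (emb A + X * emb B) * (emb C + X * emb D)"
    using decomp[of p] decomp[of q] by (simp add: A_B_C_D_def X_def)
  also have "\<dots> = emb (A * C + X * B * D) + X * emb (A * D + B * C)"
    by (simp only: emb_add emb_mult eX) (simp add: algebra_simps)
  finally have e: "p * q = emb (A * C + [:0,1:] * B * D) + [:0,1:] * emb (A * D + B * C)"
    by (simp add: X_def)
  show "to_sigma (p * q) = to_sigma p * to_sigma q + [:0,1:] * od p * od q"
    unfolding e ts_emb by (simp add: A_B_C_D_def)
  show "od (p * q) = to_sigma p * od q + od p * to_sigma q"
    unfolding e od_emb by (simp add: A_B_C_D_def)
qed

lemma Zm_unit:
  assumes "m = 0 \<or> (\<exists>b. coeff A 0 * b = 1)" "Zm m (A * E)"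
  shows "Zm m E"
proof (cases "m = 0")
  case True then show ?thesis by (simp add: Zm_def)
next
  case False
  then obtain b where "coeff A 0 * b = 1" using assms by auto
  then obtain v where v: "eqm m (A * v) 1" using inverse_exists by blast
  have "eqm m ((A * v) * E) (1 * E)" by (rule eqm_mult[OF v eqm_refl])
  moreover have "eqm m (v * (A * E)) (v * 0)"
    by (rule eqm_mult[OF eqm_refl]) (use assms in \<open>simp add: eqm_Zm\<close>)
  ultimately have "eqm m E 0" by (auto simp: eqm_def algebra_simps)
  then show ?thesis by (simp add: eqm_Zm)
qed

lemma gammaK_eq:
  fixes g :: "'a::comm_ring_1 poly"
  assumes U: "m = 0 \<or> (\<exists>b. coeff (to_sigma g) 0 * b = 1)"
    and T: "ptrunc m C = C" and Z: "Zm m (to_sigma g * C + od g)"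
  shows "gammaK m g = emb C"
proof -
  define A B where "A = to_sigma g" "B = od g"
  have od_char: "od (g * (1 + [:0,1:] * emb C')) = A * C' + B" for C'
  proof -
    have "1 + [:0,1:] * emb C' = emb 1 + [:0,1:] * emb C'" by (simp add: emb_1)
    then show ?thesis unfolding mult_decomp
      by (simp only: ts_emb od_emb) (simp add: A_B_def algebra_simps)
  qed
  have P: "emb C \<in> evenK m \<and> tmult (2 * m) g (1 + [:0, 1:] * emb C) \<in> evenK m"
  proof
    show "emb C \<in> evenK m"
      unfolding evenK_def
    proof (intro CollectI conjI allI impI)
      show "ptrunc (2 * m) (emb C) = emb C"
        unfolding ptrunc_id_iff
      proof (intro allI impI)
        fix i assume "2 * m \<le> i"
        then have "m \<le> i div 2" by auto
        then show "coeff (emb C) i = 0" using T unfolding ptrunc_id_iff by (auto simp: coeff_emb)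
      qed
    qed (simp add: coeff_emb)
    show "tmult (2 * m) g (1 + [:0, 1:] * emb C) \<in> evenK m"
      unfolding evenK_def tmult_def
    proof (intro CollectI conjI allI impI)
      fix i :: nat assume "odd i"
      then obtain j where j: "i = 2 * j + 1" by (auto elim: oddE)
      show "coeff (ptrunc (2 * m) (g * (1 + [:0, 1:] * emb C))) i = 0"
      proof (cases "i < 2 * m")
        case True
        then have "j < m" using j by auto
        have "coeff (g * (1 + [:0, 1:] * emb C)) i = coeff (A * C + B) j"
          using od_char[of C] j by (metis coeff_od)
        also have "\<dots> = 0" using Z \<open>j < m\<close> by (simp add: Zm_def A_B_def)
        finally show ?thesis using True by (simp add: coeff_ptrunc)
      qed (simp add: coeff_ptrunc)
    qed simp
  qed
  have Q: "c = emb C" if c: "c \<in> evenK m \<and> tmult (2 * m) g (1 + [:0, 1:] * c) \<in> evenK m" for c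
  proof -
    define C' where "C' = to_sigma c"
    have "od c = 0" using c by (simp add: poly_eq_iff coeff_od evenK_def)
    then have ce: "c = emb C'" using decomp[of c] by (simp add: C'_def emb_0)
    have T': "ptrunc m C' = C'"
      unfolding ptrunc_id_iff
    proof (intro allI impI)
      fix i assume "m \<le> i"
      have "ptrunc (2 * m) c = c" using c by (simp add: evenK_def)
      then show "coeff C' i = 0" using \<open>m \<le> i\<close> unfolding ptrunc_id_iff C'_def coeff_to_sigma
        by auto
    qed
    have Z': "Zm m (A * C' + B)"
      unfolding Zm_def
    proof (intro allI impI)
      fix j assume "j < m"
      have "coeff (tmult (2 * m) g (1 + [:0, 1:] * c)) (2 * j + 1) = 0"
        using c by (simp add: evenK_def)
      then have "coeff (g * (1 + [:0, 1:] * c)) (2 * j + 1) = 0"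
        using \<open>j < m\<close> by (simp add: tmult_def coeff_ptrunc)
      then show "coeff (A * C' + B) j = 0" using od_char[of C'] ce by (metis coeff_od)
    qed
    have "Zm m (A * (C' - C))"
    proof -
      have "A * (C' - C) = (A * C' + B) - (to_sigma g * C + od g)" by (simp add: A_B_def algebra_simps)
      then show ?thesis using Z Z' by (simp add: Zm_diff)
    qed
    then have "Zm m (C' - C)" using Zm_unit U by (auto simp: A_B_def)
    then have "C' = C" using T T' by (metis eqm_Zm ptrunc_eq_iff)
    then show ?thesis using ce by simp
  qed
  show ?thesis unfolding gammaK_def using P Q by (intro the_equality) blast+
qed

lemma gammaK_exists:
  fixes g :: "'a::comm_ring_1 poly"
  assumes U: "m = 0 \<or> (\<exists>b. coeff (to_sigma g) 0 * b = 1)"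
  shows "\<exists>C. ptrunc m C = C \<and> Zm m (to_sigma g * C + od g) \<and> gammaK m g = emb C"
proof (cases "m = 0")
  case True
  then have "Zm m (to_sigma g * 0 + od g)" by (simp add: Zm_def)
  moreover have "ptrunc m 0 = (0:: 'a poly)" by (simp add: ptrunc_def)
  ultimately show ?thesis using gammaK_eq[OF U] by blast
next
  case False
  then obtain b where "coeff (to_sigma g) 0 * b = 1" using U by auto
  then obtain v where v: "eqm m (to_sigma g * v) 1" using inverse_exists by blast
  define C where "C = ptrunc m (- (od g * v))"
  have T: "ptrunc m C = C" by (simp add: C_def)
  have "eqm m (to_sigma g * C + od g) 0"
  proof -
    have "eqm m (to_sigma g * C) (to_sigma g * (- (od g * v)))"
      by (rule eqm_mult[OF eqm_refl]) (simp add: C_def eqm_def coeff_ptrunc)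
    moreover have "eqm m ((to_sigma g * v) * (- od g)) (1 * (- od g))"
      by (rule eqm_mult[OF v eqm_refl])
    ultimately show ?thesis by (auto simp: eqm_def algebra_simps)
  qed
  then have Z: "Zm m (to_sigma g * C + od g)" by (simp add: eqm_Zm)
  show ?thesis using gammaK_eq[OF U T Z] T Z by blast
qed

lemma gammaK_ptrunc: "gammaK m (ptrunc (2 * m) g) = gammaK m g"
  unfolding gammaK_def tmult_def ptrunc_mult_left ..

lemma gamma_mult:
  fixes g1 g2 :: "'a::comm_ring_1 poly"
  assumes U1: "\<exists>b. coeff (to_sigma g1) 0 * b = 1"
      and U2: "\<exists>b. coeff (to_sigma g2) 0 * b = 1"
  shows "to_sigma (gammaK m (tmult (2 * m) g1 g2)) =
         circ m (to_sigma (gammaK m g1)) (to_sigma (gammaK m g2))"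
proof -
  obtain C1 where C1: "ptrunc m C1 = C1" "Zm m (to_sigma g1 * C1 + od g1)" "gammaK m g1 = emb C1"
    using gammaK_exists U1 by blast
  obtain C2 where C2: "ptrunc m C2 = C2" "Zm m (to_sigma g2 * C2 + od g2)" "gammaK m g2 = emb C2"
    using gammaK_exists U2 by blast
  define A1 A2 B1 B2 where "A1 = to_sigma g1" "A2 = to_sigma g2" "B1 = od g1" "B2 = od g2"
  define X :: "'a poly" where "X = [:0,1:]"
  define D where "D = tone m + tmult m X (tmult m C1 C2)"
  define N where "N = - (X * C1 * C2)"
  have N0: "coeff N 0 = 0" by (simp add: N_def X_def)
  have DN: "eqm m D (1 - N)"
  proof -
    have "eqm m (tmult m C1 C2) (C1 * C2)" by (simp add: tmult_def eqm_def coeff_ptrunc)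
    then have "eqm m (X * tmult m C1 C2) (X * (C1 * C2))" by (rule eqm_mult[OF eqm_refl])
    then have "eqm m (tmult m X (tmult m C1 C2)) (X * (C1 * C2))"
      by (auto simp: tmult_def eqm_def coeff_ptrunc)
    then show ?thesis by (auto simp: D_def N_def tone_def eqm_def coeff_ptrunc algebra_simps)
  qed
  have "eqm m (D * (\<Sum>i<m. N ^ i)) ((1 - N) * (\<Sum>i<m. N ^ i))" by (rule eqm_mult[OF DN eqm_refl])
  moreover have "(1 - N) * (\<Sum>i<m. N ^ i) = 1 - N ^ m" by (simp add: one_diff_power_eq)
  moreover have "eqm m (1 - N ^ m) 1" using Zm_power[OF N0, of m] by (simp add: eqm_Zm Zm_def)
  ultimately have "eqm m (D * (\<Sum>i<m. N ^ i)) 1" by (metis eqm_trans)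
  then have Du: "eqm m (D * tinv m D) 1" by (rule tinv_eq(2))
  define u where "u = tinv m D"
  define Cs where "Cs = circ m C1 C2"
  have Cs_eq: "Cs = ptrunc m ((C1 + C2) * u)"
    by (simp add: Cs_def circ_def u_def D_def X_def tmult_def)
  define A B where "A = A1 * A2 + X * B1 * B2" "B = A1 * B2 + B1 * A2"
  have AB: "to_sigma (g1 * g2) = A" "od (g1 * g2) = B"
    unfolding mult_decomp by (simp_all add: A_B_def A1_A2_B1_B2_def X_def algebra_simps)
  define E1 E2 G F H where "E1 = A1 * C1 + B1" "E2 = A2 * C2 + B2" "G = D - (1 + X * C1 * C2)"
    "F = D * u - 1" "H = Cs - (C1 + C2) * u"
  define K where "K = E1 * E2 - E1 * A2 * C2 - A1 * C1 * E2"
  have ident: "A * Cs + B = A * H + A1 * A2 * (C1 + C2) * F - A1 * A2 * G * (C1 + C2) * u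
      + X * K * (C1 + C2) * u + A1 * E2 + A2 * E1"
    unfolding A_B_def E1_E2_G_F_H_def K_def by (simp add: algebra_simps)
  have ZE1: "Zm m E1" using C1 by (simp add: E1_E2_G_F_H_def A1_A2_B1_B2_def)
  have ZE2: "Zm m E2" using C2 by (simp add: E1_E2_G_F_H_def A1_A2_B1_B2_def)
  have ZG: "Zm m G" using DN by (simp add: E1_E2_G_F_H_def N_def eqm_Zm algebra_simps)
  have ZF: "Zm m F" using Du by (simp add: E1_E2_G_F_H_def u_def eqm_Zm)
  have ZH: "Zm m H" using Zm_ptrunc by (simp add: E1_E2_G_F_H_def Cs_eq)
  have ZK: "Zm m K" unfolding K_def
    by (rule Zm_diff[OF Zm_diff[OF Zm_multL[OF ZE1] Zm_multL[OF Zm_multL[OF ZE1]]] Zm_multR[OF ZE2]])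
  have Zall: "Zm m (A * Cs + B)"
    unfolding ident
    by (intro Zm_add Zm_diff Zm_multR[OF ZH] Zm_multR[OF ZF] Zm_multL[OF Zm_multL[OF Zm_multR[OF ZG]]]
       Zm_multL[OF Zm_multL[OF Zm_multR[OF ZK]]] Zm_multR[OF ZE2] Zm_multR[OF ZE1])
  have U: "m = 0 \<or> (\<exists>b. coeff (to_sigma (g1 * g2)) 0 * b = 1)"
  proof -
    obtain b1 b2 where "coeff (to_sigma g1) 0 * b1 = 1" "coeff (to_sigma g2) 0 * b2 = 1"
      using U1 U2 by blast
    then have "coeff (to_sigma (g1 * g2)) 0 * (b1 * b2) = 1"
      by (simp add: coeff_to_sigma coeff_mult) (metis mult.assoc mult.commute mult.left_commute mult_1_right)
    then show ?thesis by blast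
  qed
  have TCs: "ptrunc m Cs = Cs" by (simp add: Cs_eq)
  have "gammaK m (g1 * g2) = emb Cs"
    by (rule gammaK_eq[OF U TCs]) (use Zall AB in simp)
  then show ?thesis
    unfolding tmult_def gammaK_ptrunc using C1 C2 by (simp add: ts_emb0 Cs_def)
qed



definition FE :: "complex fps \<Rightarrow> complex fps" where
  "FE a = fps_exp 1 oo a"

lemma FE_0th[simp]: "fps_nth (FE a) 0 = 1" by (simp add: FE_def)

lemma FE_deriv: "fps_nth a 0 = 0 \<Longrightarrow> fps_deriv (FE a) = FE a * fps_deriv a"
  by (simp add: FE_def fps_compose_deriv)

lemma FE_const:
  assumes "fps_deriv G = 0" "fps_nth G 0 = (1::complex)" shows "G = 1"
proof -
  have "G = fps_const (fps_nth G 0)" using assms(1) fps_deriv_eq_0_iff by blast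
  then show ?thesis using assms(2) by simp
qed

lemma FE_inv: "fps_nth a 0 = 0 \<Longrightarrow> FE a * FE (- a) = 1"
  by (rule FE_const) (simp_all add: fps_deriv_mult FE_deriv algebra_simps)

lemma FE_add: "fps_nth a 0 = 0 \<Longrightarrow> fps_nth b 0 = 0 \<Longrightarrow> FE (a + b) = FE a * FE b"
proof -
  assume a: "fps_nth a 0 = 0" and b: "fps_nth b 0 = 0"
  have G: "FE (a + b) * FE (- a) * FE (- b) = 1"
    by (rule FE_const) (simp_all add: a b fps_deriv_mult FE_deriv algebra_simps)
  have "FE (a + b) = FE (a + b) * (FE a * FE (- a)) * (FE b * FE (- b))"
    using FE_inv a b by simp
  also have "\<dots> = (FE (a + b) * FE (- a) * FE (- b)) * FE a * FE b" by (simp add: algebra_simps)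
  finally show ?thesis using G by simp
qed

lemma fps_Exp_add: "fps_Exp (g1 + g2) = fps_Exp g1 * fps_Exp g2"
proof -
  have "g1 + g2 - fps_const (fps_nth (g1 + g2) 0) = (g1 - fps_const (fps_nth g1 0)) + (g2 - fps_const (fps_nth g2 0))"
    by (simp add: algebra_simps fps_const_add)
  then have e: "FE (g1 + g2 - fps_const (fps_nth (g1 + g2) 0)) =
     FE (g1 - fps_const (fps_nth g1 0)) * FE (g2 - fps_const (fps_nth g2 0))"
    by (simp only:) (rule FE_add, simp_all)
  show ?thesis
    unfolding fps_Exp_def FE_def[symmetric] e
    by (simp add: exp_add algebra_simps flip: fps_const_mult)
qed

lemma fps_Exp_0th: "fps_nth (fps_Exp g) 0 = exp (fps_nth g 0)"
  by (simp add: fps_Exp_def FE_def[symmetric])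

lemma phi_deriv_add: "phi_deriv (h1 + h2) \<alpha> i = phi_deriv h1 \<alpha> i + phi_deriv h2 \<alpha> i"
  by (simp add: phi_deriv_def fps_eq_iff algebra_simps sum.distrib)

lemma coeff_taylor_T:
  "coeff (taylor_T \<alpha> k f) i = (if i < k then fps_const (1 / fact i) * phi_deriv f \<alpha> i else 0)"
  unfolding taylor_T_def coeff_sum by auto

lemma ptrunc_taylor_T: "ptrunc k (taylor_T \<alpha> k f) = taylor_T \<alpha> k f"
  unfolding ptrunc_id_iff coeff_taylor_T by auto

definition EE :: "complex \<Rightarrow> complex fps fps \<Rightarrow> complex fps" where
  "EE \<alpha> h = fps_Exp (phi_deriv h \<alpha> 0)"

lemma EE_nz: "fps_nth (EE \<alpha> h) 0 \<noteq> 0" by (simp add: EE_def fps_Exp_0th)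

lemma EE_add: "EE \<alpha> (h1 + h2) = EE \<alpha> h1 * EE \<alpha> h2"
  by (simp add: EE_def phi_deriv_add fps_Exp_add)

lemma That_eq:
  "taylor_That \<alpha> k h = ptrunc k (taylor_T \<alpha> k (bexp h) * [:inverse (EE \<alpha> h):])"
proof -
  define T where "T = taylor_T \<alpha> k (bexp h)"
  define E where "E = fps_Exp (phi_deriv h \<alpha> 0)"
  have iE: "[:inverse E:] * [:E:] = 1" "[:E:] * [:inverse E:] = 1"
    using EE_nz[of \<alpha> h] by (simp_all add: EE_def E_def inverse_mult_eq_1 inverse_mult_eq_1' one_pCons)
  have TT: "ptrunc k T = T" by (simp add: T_def ptrunc_taylor_T)
  have P: "ptrunc k (ptrunc k (T * [:inverse E:])) = ptrunc k (T * [:inverse E:]) \<and>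
      T = tmult k (ptrunc k (T * [:inverse E:])) [:E:]"
  proof -
    have e1: "T * [:inverse E:] * [:E:] = T" by (simp only: mult.assoc iE(1) mult_1_right)
    show ?thesis by (simp only: tmult_def ptrunc_mult_left e1 TT ptrunc_idem)
  qed
  have Q: "x = ptrunc k (T * [:inverse E:])" if "ptrunc k x = x \<and> T = tmult k x [:E:]" for x
  proof -
    have Tx: "T = ptrunc k (x * [:E:])" using that by (simp only: tmult_def)
    have "ptrunc k (T * [:inverse E:]) = ptrunc k (x * [:E:] * [:inverse E:])"
      by (simp only: Tx ptrunc_mult_left)
    also have "\<dots> = x" using that by (simp only: mult.assoc iE(2) mult_1_right)
    finally show ?thesis by simp
  qed
  show ?thesis unfolding taylor_That_def T_def[symmetric] E_def[symmetric] EE_def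
    using P Q by (intro the_equality) blast+
qed

lemma That_add:
  assumes bexp_add: "bexp (h1 + h2) = bexp h1 * bexp h2"
    and T_mult: "\<And>f g. eqm k (taylor_T \<alpha> k (f * g)) (taylor_T \<alpha> k f * taylor_T \<alpha> k g)"
  shows "taylor_That \<alpha> k (h1 + h2) = tmult k (taylor_That \<alpha> k h1) (taylor_That \<alpha> k h2)"
proof -
  define T1 T2 where "T1 = taylor_T \<alpha> k (bexp h1)" "T2 = taylor_T \<alpha> k (bexp h2)"
  define I1 I2 where "I1 = [:inverse (EE \<alpha> h1):]" "I2 = [:inverse (EE \<alpha> h2):]"
  have I: "[:inverse (EE \<alpha> (h1 + h2)):] = I1 * I2"
    by (simp add: EE_add fps_inverse_mult I1_I2_def)
  have "taylor_That \<alpha> k (h1 + h2) = ptrunc k (taylor_T \<alpha> k (bexp h1 * bexp h2) * (I1 * I2))"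
    by (simp add: That_eq bexp_add I)
  also have "\<dots> = ptrunc k (T1 * T2 * (I1 * I2))"
    unfolding ptrunc_eq_iff T1_T2_def by (rule eqm_mult[OF T_mult eqm_refl])
  also have "\<dots> = ptrunc k ((T1 * I1) * (T2 * I2))" by (simp add: algebra_simps)
  also have "\<dots> = tmult k (taylor_That \<alpha> k h1) (taylor_That \<alpha> k h2)"
  proof -
    have "taylor_That \<alpha> k h1 = ptrunc k (T1 * I1)" "taylor_That \<alpha> k h2 = ptrunc k (T2 * I2)"
      by (simp_all only: That_eq T1_T2_def I1_I2_def)
    then show ?thesis by (simp only: tmult_def ptrunc_mult_left ptrunc_mult_right)
  qed
  finally show ?thesis .
qed

lemma bexp_00: "fps_nth (fps_nth (bexp h) 0) 0 = exp (fps_nth (fps_nth h 0) 0)"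
  by (simp add: bexp_def Let_def)

lemma phi_deriv_00: "fps_nth (phi_deriv f \<alpha> 0) 0 = fps_nth (fps_nth f 0) 0"
  by (simp add: phi_deriv_def)

lemma That_unit:
  assumes "0 < k"
  shows "\<exists>b. coeff (to_sigma (taylor_That \<alpha> k h)) 0 * b = 1"
proof -
  define c where "c = coeff (to_sigma (taylor_That \<alpha> k h)) 0"
  have "c = phi_deriv (bexp h) \<alpha> 0 * inverse (EE \<alpha> h)"
    using assms by (simp add: c_def coeff_to_sigma That_eq coeff_ptrunc coeff_mult coeff_taylor_T)
  then have "fps_nth c 0 \<noteq> 0" using EE_nz[of \<alpha> h] by (simp add: phi_deriv_00 bexp_00)
  then have "c * inverse c = 1" by (rule inverse_mult_eq_1')
  then show ?thesis unfolding c_def by blast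
qed



lemma tri_sum:
  fixes F :: "nat \<Rightarrow> nat \<Rightarrow> 'a::comm_monoid_add"
  shows "(\<Sum>a\<le>n. \<Sum>a1\<le>a. F a1 (a - a1)) = (\<Sum>a1\<le>n. \<Sum>a2\<le>n - a1. F a1 a2)"
proof -
  have "(\<Sum>a\<le>n. \<Sum>a1\<le>a. F a1 (a - a1)) = (\<Sum>(i,j)\<in>{(i,j). i + j \<le> n}. F i j)"
    by (rule sum.triangle_reindex_eq[symmetric])
  also have "{(i,j). i + j \<le> n} = Sigma {..n} (\<lambda>i. {..n - i})" by auto
  also have "(\<Sum>(i,j)\<in>Sigma {..n} (\<lambda>i. {..n - i}). F i j) = (\<Sum>a1\<le>n. \<Sum>a2\<le>n - a1. F a1 a2)"
    by (rule sum.Sigma[symmetric]) auto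
  finally show ?thesis .
qed

lemma swap_tri:
  fixes H :: "nat \<Rightarrow> nat \<Rightarrow> 'a::comm_monoid_add"
  shows "(\<Sum>x\<le>m. \<Sum>y\<le>m - x. H x y) = (\<Sum>y\<le>m. \<Sum>x\<le>m - y. H x y)"
proof -
  have "(\<Sum>x\<le>m. \<Sum>y\<le>m - x. H x y) = (\<Sum>x\<le>m. \<Sum>y\<in>{y. y \<in> {..m} \<and> x + y \<le> m}. H x y)"
    by (intro sum.cong refl) auto
  also have "\<dots> = (\<Sum>y\<le>m. \<Sum>x\<in>{x. x \<in> {..m} \<and> x + y \<le> m}. H x y)"
    by (rule sum.swap_restrict) auto
  also have "\<dots> = (\<Sum>y\<le>m. \<Sum>x\<le>m - y. H x y)"
    by (intro sum.cong refl) auto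
  finally show ?thesis .
qed

definition cf :: "'a::comm_ring_1 fps fps \<Rightarrow> nat \<Rightarrow> 'a \<Rightarrow> 'a \<Rightarrow> 'a" where
  "cf f n x y = (\<Sum>a\<le>n. fps_nth (fps_nth f a) (n - a) * (x ^ a * y ^ (n - a)))"

lemma cf_mult:
  fixes f g :: "'a::comm_ring_1 fps fps"
  shows "cf (f * g) n x y = (\<Sum>n1\<le>n. cf f n1 x y * cf g (n - n1) x y)"
proof -
  define G where "G a1 b1 a2 b2 = fps_nth (fps_nth f a1) b1 * fps_nth (fps_nth g a2) b2 * (x ^ (a1 + a2) * y ^ (b1 + b2))" for a1 b1 a2 b2
  have "cf (f * g) n x y = (\<Sum>a\<le>n. \<Sum>a1\<le>a. \<Sum>b1\<le>n - a. G a1 b1 (a - a1) (n - a - b1))"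
  proof -
    have "fps_nth (fps_nth (f * g) a) (n - a) * (x ^ a * y ^ (n - a)) =
        (\<Sum>a1\<le>a. \<Sum>b1\<le>n - a. G a1 b1 (a - a1) (n - a - b1))" if "a \<le> n" for a
    proof -
      have "fps_nth (fps_nth (f * g) a) (n - a) =
          (\<Sum>a1\<le>a. \<Sum>b1\<le>n - a. fps_nth (fps_nth f a1) b1 * fps_nth (fps_nth g (a - a1)) (n - a - b1))"
        by (simp add: fps_mult_nth fps_sum_nth atLeast0AtMost)
      moreover have "x ^ a * y ^ (n - a) = x ^ (a1 + (a - a1)) * y ^ (b1 + (n - a - b1))"
        if "a1 \<le> a" "b1 \<le> n - a" for a1 b1
      proof -
        have "a1 + (a - a1) = a" "b1 + (n - a - b1) = n - a" using that by arith+
        then show ?thesis by simp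
      qed
      ultimately show ?thesis
        unfolding G_def by (simp add: sum_distrib_right mult.assoc)
    qed
    then show ?thesis unfolding cf_def by (intro sum.cong refl) auto
  qed
  also have "\<dots> = (\<Sum>a1\<le>n. \<Sum>a2\<le>n - a1. \<Sum>b1\<le>n - (a1 + a2). G a1 b1 a2 (n - (a1 + a2) - b1))"
  proof -
    have "(\<Sum>a\<le>n. \<Sum>a1\<le>a. \<Sum>b1\<le>n - a. G a1 b1 (a - a1) (n - a - b1)) =
        (\<Sum>a\<le>n. \<Sum>a1\<le>a. (\<lambda>a1 a2. \<Sum>b1\<le>n - (a1 + a2). G a1 b1 a2 (n - (a1 + a2) - b1)) a1 (a - a1))"
      by (intro sum.cong refl) auto
    then show ?thesis using tri_sum[of "\<lambda>a1 a2. \<Sum>b1\<le>n - (a1 + a2). G a1 b1 a2 (n - (a1 + a2) - b1)" n]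
      by (simp only:)
  qed
  also have "\<dots> = (\<Sum>a1\<le>n. \<Sum>b1\<le>n - a1. \<Sum>a2\<le>n - (a1 + b1). G a1 b1 a2 (n - (a1 + b1) - a2))"
  proof (rule sum.cong[OF refl])
    fix a1 assume "a1 \<in> {..n}"
    have "(\<Sum>a2\<le>n - a1. \<Sum>b1\<le>n - (a1 + a2). G a1 b1 a2 (n - (a1 + a2) - b1)) =
        (\<Sum>a2\<le>n - a1. \<Sum>b1\<le>(n - a1) - a2. G a1 b1 a2 ((n - a1) - a2 - b1))"
      by (intro sum.cong refl) (auto simp: diff_diff_left)
    also have "\<dots> = (\<Sum>b1\<le>n - a1. \<Sum>a2\<le>(n - a1) - b1. G a1 b1 a2 ((n - a1) - a2 - b1))"
      by (rule swap_tri)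
    also have "\<dots> = (\<Sum>b1\<le>n - a1. \<Sum>a2\<le>n - (a1 + b1). G a1 b1 a2 (n - (a1 + b1) - a2))"
      by (intro sum.cong refl) (auto simp: diff_diff_left add_ac)
    finally show "(\<Sum>a2\<le>n - a1. \<Sum>b1\<le>n - (a1 + a2). G a1 b1 a2 (n - (a1 + a2) - b1)) =
        (\<Sum>b1\<le>n - a1. \<Sum>a2\<le>n - (a1 + b1). G a1 b1 a2 (n - (a1 + b1) - a2))" .
  qed
  also have "\<dots> = (\<Sum>n1\<le>n. \<Sum>a1\<le>n1. \<Sum>a2\<le>n - n1. G a1 (n1 - a1) a2 (n - n1 - a2))"
  proof -
    have "(\<Sum>n1\<le>n. \<Sum>a1\<le>n1. \<Sum>a2\<le>n - n1. G a1 (n1 - a1) a2 (n - n1 - a2)) =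
        (\<Sum>n1\<le>n. \<Sum>a1\<le>n1. (\<lambda>a1 b1. \<Sum>a2\<le>n - (a1 + b1). G a1 b1 a2 (n - (a1 + b1) - a2)) a1 (n1 - a1))"
      by (intro sum.cong refl) auto
    then show ?thesis using tri_sum[of "\<lambda>a1 b1. \<Sum>a2\<le>n - (a1 + b1). G a1 b1 a2 (n - (a1 + b1) - a2)" n]
      by (simp only:)
  qed
  also have "\<dots> = (\<Sum>n1\<le>n. cf f n1 x y * cf g (n - n1) x y)"
  proof (rule sum.cong[OF refl])
    fix n1 assume "n1 \<in> {..n}"
    have "cf f n1 x y * cf g (n - n1) x y =
       (\<Sum>a1\<le>n1. \<Sum>a2\<le>n - n1. (fps_nth (fps_nth f a1) (n1 - a1) * (x ^ a1 * y ^ (n1 - a1))) *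
          (fps_nth (fps_nth g a2) (n - n1 - a2) * (x ^ a2 * y ^ (n - n1 - a2))))"
      unfolding cf_def by (simp add: sum_product)
    also have "\<dots> = (\<Sum>a1\<le>n1. \<Sum>a2\<le>n - n1. G a1 (n1 - a1) a2 (n - n1 - a2))"
      unfolding G_def by (intro sum.cong refl) (simp only: power_add mult_ac)
    finally show "(\<Sum>a1\<le>n1. \<Sum>a2\<le>n - n1. G a1 (n1 - a1) a2 (n - n1 - a2)) = cf f n1 x y * cf g (n - n1) x y" by simp
  qed
  finally show ?thesis .
qed

lemma hd_sum:
  fixes g :: "'b \<Rightarrow> complex \<Rightarrow> complex"
  assumes "finite S" "\<And>s. s \<in> S \<Longrightarrow> g s holomorphic_on UNIV"
  shows "(deriv ^^ i) (\<lambda>t. \<Sum>s\<in>S. g s t) z = (\<Sum>s\<in>S. (deriv ^^ i) (g s) z)"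
  using assms
proof (induction S rule: finite_induct)
  case empty
  then show ?case by simp
next
  case (insert x F)
  have "(deriv ^^ i) (\<lambda>t. \<Sum>s\<in>insert x F. g s t) z = (deriv ^^ i) (\<lambda>t. g x t + (\<Sum>s\<in>F. g s t)) z"
    using insert by simp
  also have "\<dots> = (deriv ^^ i) (g x) z + (deriv ^^ i) (\<lambda>t. \<Sum>s\<in>F. g s t) z"
    by (rule higher_deriv_add[where S = UNIV]) (use insert in \<open>auto intro!: holomorphic_intros\<close>)
  finally show ?case using insert by simp
qed

lemma w_hol: "(\<lambda>t. cos t ^ a * sin t ^ b) holomorphic_on (UNIV :: complex set)"
  by (intro holomorphic_intros)

lemma cfz_hol: "(\<lambda>t. cf f n (cos t) (sin t)) holomorphic_on (UNIV :: complex set)"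
  unfolding cf_def by (intro holomorphic_intros)

lemma phi_cf: "fps_nth (phi_deriv f \<alpha> i) n = (deriv ^^ i) (\<lambda>t. cf f n (cos t) (sin t)) \<alpha>"
proof -
  have "(deriv ^^ i) (\<lambda>t. cf f n (cos t) (sin t)) \<alpha> =
      (\<Sum>a\<le>n. (deriv ^^ i) (\<lambda>t. fps_nth (fps_nth f a) (n - a) * (cos t ^ a * sin t ^ (n - a))) \<alpha>)"
    unfolding cf_def by (rule hd_sum) (auto intro!: holomorphic_intros)
  also have "\<dots> = (\<Sum>a\<le>n. fps_nth (fps_nth f a) (n - a) * (deriv ^^ i) (\<lambda>t. cos t ^ a * sin t ^ (n - a)) \<alpha>)"
    by (intro sum.cong refl higher_deriv_cmult[where A = UNIV] w_hol) auto
  finally show ?thesis by (simp add: phi_deriv_def)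
qed

lemma phi_mult:
  "phi_deriv (f * g) \<alpha> i = (\<Sum>j\<le>i. of_nat (i choose j) * phi_deriv f \<alpha> j * phi_deriv g \<alpha> (i - j))"
proof (rule fps_ext)
  fix n
  define P where "P n1 = (\<lambda>t::complex. cf f n1 (cos t) (sin t))" for n1
  define Q where "Q n1 = (\<lambda>t::complex. cf g n1 (cos t) (sin t))" for n1
  have hP: "P n1 holomorphic_on UNIV" "Q n1 holomorphic_on UNIV" for n1
    unfolding P_def Q_def by (rule cfz_hol)+
  have "fps_nth (phi_deriv (f * g) \<alpha> i) n = (deriv ^^ i) (\<lambda>t. \<Sum>n1\<le>n. P n1 t * Q (n - n1) t) \<alpha>"
    by (simp add: phi_cf cf_mult P_def Q_def)
  also have "\<dots> = (\<Sum>n1\<le>n. (deriv ^^ i) (\<lambda>t. P n1 t * Q (n - n1) t) \<alpha>)"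
    by (rule hd_sum) (auto intro!: holomorphic_intros hP)
  also have "\<dots> = (\<Sum>n1\<le>n. \<Sum>j=0..i. of_nat (i choose j) * (deriv ^^ j) (P n1) \<alpha> * (deriv ^^ (i - j)) (Q (n - n1)) \<alpha>)"
    by (intro sum.cong refl higher_deriv_mult[where S = UNIV] hP) auto
  also have "\<dots> = (\<Sum>n1\<le>n. \<Sum>j\<le>i. of_nat (i choose j) * fps_nth (phi_deriv f \<alpha> j) n1 * fps_nth (phi_deriv g \<alpha> (i - j)) (n - n1))"
    by (simp add: phi_cf P_def Q_def atLeast0AtMost)
  also have "\<dots> = (\<Sum>j\<le>i. \<Sum>n1\<le>n. of_nat (i choose j) * fps_nth (phi_deriv f \<alpha> j) n1 * fps_nth (phi_deriv g \<alpha> (i - j)) (n - n1))"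
    by (rule sum.swap)
  also have "\<dots> = fps_nth (\<Sum>j\<le>i. of_nat (i choose j) * phi_deriv f \<alpha> j * phi_deriv g \<alpha> (i - j)) n"
    unfolding fps_sum_nth
  proof (rule sum.cong[OF refl])
    fix j
    show "(\<Sum>n1\<le>n. of_nat (i choose j) * fps_nth (phi_deriv f \<alpha> j) n1 * fps_nth (phi_deriv g \<alpha> (i - j)) (n - n1)) =
      fps_nth (of_nat (i choose j) * phi_deriv f \<alpha> j * phi_deriv g \<alpha> (i - j)) n"
      unfolding fps_of_nat[symmetric]
      by (subst fps_mult_nth) (simp add: atLeast0AtMost mult.assoc)
  qed
  finally show "fps_nth (phi_deriv (f * g) \<alpha> i) n =
     fps_nth (\<Sum>j\<le>i. of_nat (i choose j) * phi_deriv f \<alpha> j * phi_deriv g \<alpha> (i - j)) n" .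
qed

lemma binom_scalar:
  assumes "j \<le> i"
  shows "(1 / fact i) * of_nat (i choose j) = (1 / fact j) * (1 / fact (i - j) :: complex)"
proof -
  have "of_nat (i choose j) = (fact i / (fact j * fact (i - j)) :: complex)"
    by (rule binomial_fact[OF assms])
  then show ?thesis by simp
qed

lemma taylor_T_mult:
  "eqm k (taylor_T \<alpha> k (f * g)) (taylor_T \<alpha> k f * taylor_T \<alpha> k g)"
  unfolding eqm_def
proof (intro allI impI)
  fix i assume "i < k"
  have "coeff (taylor_T \<alpha> k (f * g)) i =
      (\<Sum>j\<le>i. fps_const (1 / fact i) * (of_nat (i choose j) * phi_deriv f \<alpha> j * phi_deriv g \<alpha> (i - j)))"
    using \<open>i < k\<close> by (simp add: coeff_taylor_T phi_mult sum_distrib_left)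
  also have "\<dots> = (\<Sum>j\<le>i. (fps_const (1 / fact j) * phi_deriv f \<alpha> j) * (fps_const (1 / fact (i - j)) * phi_deriv g \<alpha> (i - j)))"
  proof (rule sum.cong[OF refl])
    fix j assume "j \<in> {..i}"
    then have e: "fps_const (1 / fact i) * of_nat (i choose j) = fps_const (1 / fact j) * (fps_const (1 / fact (i - j)) :: complex fps)"
      by (simp only: fps_of_nat[symmetric] fps_const_mult binom_scalar atMost_iff)
    have "fps_const (1 / fact i) * (of_nat (i choose j) * phi_deriv f \<alpha> j * phi_deriv g \<alpha> (i - j)) =
        (fps_const (1 / fact i) * of_nat (i choose j)) * phi_deriv f \<alpha> j * phi_deriv g \<alpha> (i - j)"
      by (simp only: mult.assoc)
    also have "\<dots> = (fps_const (1 / fact j) * phi_deriv f \<alpha> j) * (fps_const (1 / fact (i - j)) * phi_deriv g \<alpha> (i - j))"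
      unfolding e by (simp only: mult_ac)
    finally show "fps_const (1 / fact i) * (of_nat (i choose j) * phi_deriv f \<alpha> j * phi_deriv g \<alpha> (i - j)) =
        (fps_const (1 / fact j) * phi_deriv f \<alpha> j) * (fps_const (1 / fact (i - j)) * phi_deriv g \<alpha> (i - j))" .
  qed
  also have "\<dots> = coeff (taylor_T \<alpha> k f * taylor_T \<alpha> k g) i"
    unfolding coeff_mult using \<open>i < k\<close> by (intro sum.cong refl) (auto simp: coeff_taylor_T)
  finally show "coeff (taylor_T \<alpha> k (f * g)) i = coeff (taylor_T \<alpha> k f * taylor_T \<alpha> k g) i" .
qed



type_synonym S2 = "complex fps fps"

definition lowdeg :: "nat \<Rightarrow> S2 \<Rightarrow> bool" where
  "lowdeg N f \<longleftrightarrow> (\<forall>i j. i + j < N \<longrightarrow> fps_nth (fps_nth f i) j = 0)"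

definition agree :: "nat \<Rightarrow> S2 \<Rightarrow> S2 \<Rightarrow> bool" where
  "agree N f g \<longleftrightarrow> (\<forall>i j. i + j \<le> N \<longrightarrow> fps_nth (fps_nth f i) j = fps_nth (fps_nth g i) j)"

definition sc :: "complex \<Rightarrow> S2 \<Rightarrow> S2" where
  "sc r f = fps_const (fps_const r) * f"

lemma sc_nth[simp]: "fps_nth (fps_nth (sc r f) i) j = r * fps_nth (fps_nth f i) j"
  by (simp add: sc_def)

lemma sc_sc: "sc r (sc s f) = sc (r * s) f"
  by (simp add: sc_def mult.assoc[symmetric] fps_const_mult)

lemma sc_mult: "sc r f * sc s g = sc (r * s) (f * g)"
proof -
  have "fps_const (fps_const r) * f * (fps_const (fps_const s) * g) =
      (fps_const (fps_const r) * fps_const (fps_const s)) * (f * g)" by (simp only: mult_ac)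
  then show ?thesis unfolding sc_def by simp
qed

lemma sc_mult_left: "sc r f * g = sc r (f * g)"
  by (simp add: sc_def mult.assoc)

lemma sc_sum: "sc r (\<Sum>x\<in>A. F x) = (\<Sum>x\<in>A. sc r (F x))"
  by (simp add: sc_def sum_distrib_left)

lemma sc_of_nat: "of_nat c * f = sc (of_nat c) f"
  by (simp add: sc_def fps_of_nat[symmetric] del: fps_of_nat)

lemma mult_nth2: "fps_nth (fps_nth (f * g) i) j =
   (\<Sum>i1=0..i. \<Sum>j1=0..j. fps_nth (fps_nth f i1) j1 * fps_nth (fps_nth g (i - i1)) (j - j1))"
  by (simp add: fps_mult_nth fps_sum_nth)

lemma lowdeg_mult: "lowdeg p f \<Longrightarrow> lowdeg q g \<Longrightarrow> lowdeg (p + q) (f * g)"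
  unfolding lowdeg_def mult_nth2
proof (intro allI impI sum.neutral ballI)
  fix i j i1 j1
  assume f: "\<forall>i j. i + j < p \<longrightarrow> fps_nth (fps_nth f i) j = 0"
    and g: "\<forall>i j. i + j < q \<longrightarrow> fps_nth (fps_nth g i) j = 0"
    and ij: "i + j < p + q" and i1: "i1 \<in> {0..i}" and j1: "j1 \<in> {0..j}"
  show "fps_nth (fps_nth f i1) j1 * fps_nth (fps_nth g (i - i1)) (j - j1) = 0"
  proof (cases "i1 + j1 < p")
    case True then have "fps_nth (fps_nth f i1) j1 = 0" using f by blast
    then show ?thesis by simp
  next
    case False
    have "i1 \<le> i" "j1 \<le> j" using i1 j1 by auto
    then have "(i - i1) + (j - j1) < q" using ij False by linarith
    then have "fps_nth (fps_nth g (i - i1)) (j - j1) = 0" using g by blast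
    then show ?thesis by simp
  qed
qed

lemma lowdeg_power: "lowdeg 1 a \<Longrightarrow> lowdeg n (a ^ n)"
proof (induction n)
  case 0 then show ?case by (simp add: lowdeg_def)
next
  case (Suc n)
  then have "lowdeg (1 + n) (a * a ^ n)" by (intro lowdeg_mult)
  then show ?case by simp
qed

lemma lowdeg_sum: "(\<And>x. x \<in> A \<Longrightarrow> lowdeg k (F x)) \<Longrightarrow> lowdeg k (\<Sum>x\<in>A. F x)"
  by (simp add: lowdeg_def fps_sum_nth)

lemma lowdeg_sc: "lowdeg k f \<Longrightarrow> lowdeg k (sc r f)"
  by (simp add: lowdeg_def)

lemma lowdeg_mono: "lowdeg p f \<Longrightarrow> q \<le> p \<Longrightarrow> lowdeg q f"
  by (simp add: lowdeg_def)

lemma agree_lowdeg: "agree N f g \<longleftrightarrow> lowdeg (Suc N) (f - g)"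
  by (auto simp: agree_def lowdeg_def)

lemma agree_refl: "agree N f f" by (simp add: agree_def)
lemma agree_sym: "agree N f g \<Longrightarrow> agree N g f" by (simp add: agree_def)
lemma agree_trans: "agree N f g \<Longrightarrow> agree N g h \<Longrightarrow> agree N f h" by (simp add: agree_def)
lemma agree_sc: "agree N f g \<Longrightarrow> agree N (sc r f) (sc r g)" by (simp add: agree_def)

lemma agree_mult: "agree N f f' \<Longrightarrow> agree N g g' \<Longrightarrow> agree N (f * g) (f' * g')"
  unfolding agree_def mult_nth2
proof (intro allI impI sum.cong refl)
  fix i j i1 j1
  assume f: "\<forall>i j. i + j \<le> N \<longrightarrow> fps_nth (fps_nth f i) j = fps_nth (fps_nth f' i) j"
    and g: "\<forall>i j. i + j \<le> N \<longrightarrow> fps_nth (fps_nth g i) j = fps_nth (fps_nth g' i) j"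
    and ij: "i + j \<le> N" and i1: "i1 \<in> {0..i}" and j1: "j1 \<in> {0..j}"
  have "i1 \<le> i" "j1 \<le> j" using i1 j1 by auto
  then have "i1 + j1 \<le> N" "(i - i1) + (j - j1) \<le> N" using ij by linarith+
  then have "fps_nth (fps_nth f i1) j1 = fps_nth (fps_nth f' i1) j1"
    "fps_nth (fps_nth g (i - i1)) (j - j1) = fps_nth (fps_nth g' (i - i1)) (j - j1)" using f g by blast+
  then show "fps_nth (fps_nth f i1) j1 * fps_nth (fps_nth g (i - i1)) (j - j1) =
    fps_nth (fps_nth f' i1) j1 * fps_nth (fps_nth g' (i - i1)) (j - j1)" by simp
qed

definition EN :: "nat \<Rightarrow> S2 \<Rightarrow> S2" where
  "EN N a = (\<Sum>n\<le>N. sc (1 / fact n) (a ^ n))"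

lemma bexp_agree:
  fixes h :: S2
  defines "c \<equiv> fps_nth (fps_nth h 0) 0"
  shows "agree N (bexp h) (sc (exp c) (EN N (h - fps_const (fps_const c))))"
  unfolding agree_def
proof (intro allI impI)
  fix i j assume ij: "i + j \<le> N"
  define a where "a = h - fps_const (fps_const c)"
  have a1: "lowdeg 1 a" by (simp add: lowdeg_def a_def c_def)
  have "fps_nth (fps_nth (EN N a) i) j = (\<Sum>n\<le>N. fps_nth (fps_nth (a ^ n) i) j / fact n)"
    by (simp add: EN_def fps_sum_nth)
  also have "\<dots> = (\<Sum>n\<le>i + j. fps_nth (fps_nth (a ^ n) i) j / fact n)"
  proof (rule sum.mono_neutral_right)
    show "\<forall>n\<in>{..N} - {..i + j}. fps_nth (fps_nth (a ^ n) i) j / fact n = 0"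
    proof
      fix n assume "n \<in> {..N} - {..i + j}"
      then have "i + j < n" by auto
      then show "fps_nth (fps_nth (a ^ n) i) j / fact n = 0"
        using lowdeg_power[OF a1, of n] by (simp add: lowdeg_def)
    qed
  qed (use ij in auto)
  finally have e: "fps_nth (fps_nth (EN N a) i) j = (\<Sum>n\<le>i + j. fps_nth (fps_nth (a ^ n) i) j / fact n)" .
  have "fps_nth (fps_nth (bexp h) i) j = exp c * (\<Sum>n\<le>i + j. fps_nth (fps_nth (a ^ n) i) j / fact n)"
    unfolding bexp_def Let_def c_def[symmetric] a_def[symmetric] by simp
  then show "fps_nth (fps_nth (bexp h) i) j = fps_nth (fps_nth (sc (exp c) (EN N a)) i) j"
    by (simp only: sc_nth e)
qed

lemma EN_add:
  assumes a: "lowdeg 1 a" and b: "lowdeg 1 b"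
  shows "agree N (EN N (a + b)) (EN N a * EN N b)"
proof -
  define T where "T p q = sc (1 / fact p * (1 / fact q)) (a ^ p * b ^ q)" for p q
  have "EN N (a + b) = (\<Sum>n\<le>N. \<Sum>k\<le>n. T k (n - k))"
    unfolding EN_def
  proof (rule sum.cong[OF refl])
    fix n
    have "sc (1 / fact n) ((a + b) ^ n) = (\<Sum>k\<le>n. sc (1 / fact n) (sc (of_nat (n choose k)) (a ^ k * b ^ (n - k))))"
    proof -
      have t: "of_nat (n choose k) * a ^ k * b ^ (n - k) = sc (of_nat (n choose k)) (a ^ k * b ^ (n - k))" for k
        by (simp only: sc_of_nat sc_mult_left)
      have "(a + b) ^ n = (\<Sum>k\<le>n. of_nat (n choose k) * a ^ k * b ^ (n - k))" by (rule binomial_ring)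
      then show ?thesis by (simp only: sc_sum t)
    qed
    also have "\<dots> = (\<Sum>k\<le>n. T k (n - k))"
      by (intro sum.cong refl) (simp only: sc_sc binom_scalar atMost_iff T_def)
    finally show "sc (1 / fact n) ((a + b) ^ n) = (\<Sum>k\<le>n. T k (n - k))" .
  qed
  also have "\<dots> = (\<Sum>p\<le>N. \<Sum>q\<le>N - p. T p q)" by (rule tri_sum)
  finally have e1: "EN N (a + b) = (\<Sum>p\<le>N. \<Sum>q\<le>N - p. T p q)" .
  have e2: "EN N a * EN N b = (\<Sum>p\<le>N. \<Sum>q\<le>N. T p q)"
    by (simp only: EN_def sum_product sc_mult T_def)
  have "EN N a * EN N b - EN N (a + b) = (\<Sum>p\<le>N. \<Sum>q\<in>{..N} - {..N - p}. T p q)"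
    unfolding e1 e2 sum_subtractf[symmetric]
  proof (rule sum.cong[OF refl])
    fix p assume "p \<in> {..N}"
    show "(\<Sum>q\<le>N. T p q) - (\<Sum>q\<le>N - p. T p q) = (\<Sum>q\<in>{..N} - {..N - p}. T p q)"
      by (rule sum_diff[symmetric]) auto
  qed
  moreover have "lowdeg (Suc N) (\<Sum>p\<le>N. \<Sum>q\<in>{..N} - {..N - p}. T p q)"
  proof (intro lowdeg_sum)
    fix p q assume p: "p \<in> {..N}" and q: "q \<in> {..N} - {..N - p}"
    have "lowdeg (p + q) (a ^ p * b ^ q)" by (intro lowdeg_mult lowdeg_power a b)
    moreover have "Suc N \<le> p + q" using p q by auto
    ultimately show "lowdeg (Suc N) (T p q)" unfolding T_def by (intro lowdeg_sc) (rule lowdeg_mono)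
  qed
  ultimately have "lowdeg (Suc N) (EN N a * EN N b - EN N (a + b))" by (simp only:)
  then have "agree N (EN N a * EN N b) (EN N (a + b))" by (simp only: agree_lowdeg)
  then show ?thesis by (rule agree_sym)
qed

lemma bexp_add: "bexp (h1 + h2) = bexp h1 * bexp h2"
proof -
  have "fps_nth (fps_nth (bexp (h1 + h2)) i) j = fps_nth (fps_nth (bexp h1 * bexp h2) i) j" for i j
  proof -
    define N where "N = i + j"
    define c1 c2 where "c1 = fps_nth (fps_nth h1 0) 0" "c2 = fps_nth (fps_nth h2 0) 0"
    define a1 a2 where "a1 = h1 - fps_const (fps_const c1)" "a2 = h2 - fps_const (fps_const c2)"
    have l1: "lowdeg 1 a1" "lowdeg 1 a2" by (simp_all add: lowdeg_def a1_a2_def c1_c2_def)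
    have c: "fps_nth (fps_nth (h1 + h2) 0) 0 = c1 + c2" by (simp add: c1_c2_def)
    have a: "h1 + h2 - fps_const (fps_const (c1 + c2)) = a1 + a2"
      by (simp add: a1_a2_def algebra_simps)
    have "agree N (bexp (h1 + h2)) (sc (exp (c1 + c2)) (EN N (a1 + a2)))"
      using bexp_agree[of N "h1 + h2"] unfolding c a .
    moreover have "agree N (sc (exp (c1 + c2)) (EN N (a1 + a2))) (sc (exp c1) (EN N a1) * sc (exp c2) (EN N a2))"
      unfolding sc_mult exp_add[symmetric] by (intro agree_sc EN_add l1)
    moreover have "agree N (sc (exp c1) (EN N a1) * sc (exp c2) (EN N a2)) (bexp h1 * bexp h2)"
      by (rule agree_mult; rule agree_sym; unfold a1_a2_def c1_c2_def; rule bexp_agree)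
    ultimately have "agree N (bexp (h1 + h2)) (bexp h1 * bexp h2)" by (metis agree_trans)
    then show ?thesis by (simp add: agree_def N_def)
  qed
  then show ?thesis by (intro fps_ext) simp
qed



theorem lemma3p15:
  fixes \<alpha> :: complex and m :: nat
  shows "Upsilon \<alpha> m \<in> hom Rhat_add_group (circ_group m)"
proof (cases "m = 0")
  case True
  have U0: "Upsilon \<alpha> 0 h = 0" for h
  proof -
    obtain C where C: "ptrunc 0 C = C" "gammaK 0 (taylor_That \<alpha> (2 * 0) h) = emb C"
      using gammaK_exists[of 0 "taylor_That \<alpha> (2 * 0) h"] by blast
    have "C = 0" using C(1) by (simp add: ptrunc_def)
    then show ?thesis using C(2) by (simp add: Upsilon_def ts_emb0)
  qed
  show ?thesis
    unfolding hom_def Rhat_add_group_def circ_group_def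
    using True by (simp add: U0 ptrunc_def circ_def tmult_def)
next
  case False
  have U: "\<exists>b. coeff (to_sigma (taylor_That \<alpha> (2 * m) h)) 0 * b = 1" for h
    using False by (intro That_unit) simp
  have car: "ptrunc m (Upsilon \<alpha> m h) = Upsilon \<alpha> m h" for h
  proof -
    obtain C where C: "ptrunc m C = C" "gammaK m (taylor_That \<alpha> (2 * m) h) = emb C"
      using gammaK_exists[of m "taylor_That \<alpha> (2 * m) h"] U[of h] by blast
    then show ?thesis by (simp add: Upsilon_def ts_emb0)
  qed
  have mul: "Upsilon \<alpha> m (x + y) = circ m (Upsilon \<alpha> m x) (Upsilon \<alpha> m y)" for x y
  proof -
    have "taylor_That \<alpha> (2 * m) (x + y) =
        tmult (2 * m) (taylor_That \<alpha> (2 * m) x) (taylor_That \<alpha> (2 * m) y)"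
      by (rule That_add[OF bexp_add taylor_T_mult])
    then show ?thesis unfolding Upsilon_def using gamma_mult[OF U U] by simp
  qed
  show ?thesis
    unfolding hom_def Rhat_add_group_def circ_group_def
    by (simp add: car mul)
qed


end
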